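(* Let $0<q<1$. Then \[ \sum_{n=0}^{\infty}\frac{(1+q^{2n+1})\,q^{n}}{(1-q^{2n+1})^{2}}=\frac{\pi_{q}^{2}}{(1-q^{2})^{2}q^{1/2}}. \]
   Context: Let $0<q<1$. With $(z;q)_\infty=\prod_{k\ge0}(1-zq^k)$, Gosper's $q$-pi is $\pi_q=(1-q^2)q^{1/4}\frac{(q^2;q^2)_\infty^2}{(q;q^2)_\infty^2}$. *)

theory Defs
  imports "HOL-Analysis.Analysis"
begin

definition qpoch_inf :: "real \<Rightarrow> real \<Rightarrow> real" where
  "qpoch_inf z q = (\<Prod>k. (1 - z * q ^ k))"

definition gosper_pi :: "real \<Rightarrow> real" where
  "gosper_pi q = (1 - q\<^sup>2) * q powr (1/4) *
     (qpoch_inf (q\<^sup>2) (q\<^sup>2))\<^sup>2 / (qpoch_inf q (q\<^sup>2))\<^sup>2"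

end

theory Submission
  imports Defs
begin


definition fp :: "real \<Rightarrow> real \<Rightarrow> nat \<Rightarrow> real" where
  "fp a p j = (\<Prod>k<j. 1 - a * p ^ k)"

lemma fp_Suc: "fp a p (Suc j) = fp a p j * (1 - a * p ^ j)"
  by (simp add: fp_def)

lemma fp_0[simp]: "fp a p 0 = 1" by (simp add: fp_def)

lemma split_int_interval:
  "{- int A..<int B} = int ` {..<B} \<union> (\<lambda>k. - int k - 1) ` {..<A}"
proof (intro equalityI subsetI)
  fix x assume "x \<in> {- int A..<int B}"
  then have x: "- int A \<le> x" "x < int B" by auto
  show "x \<in> int ` {..<B} \<union> (\<lambda>k. - int k - 1) ` {..<A}"
  proof (cases "x \<ge> 0")
    case True
    then have "x = int (nat x)" "nat x < B" using x by auto
    then have "x \<in> int ` {..<B}" by (metis imageI lessThan_iff)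
    then show ?thesis by blast
  next
    case False
    then have "x = - int (nat (-x-1)) - 1" "nat (-x-1) < A" using x by auto
    then have "x \<in> (\<lambda>k. - int k - 1) ` {..<A}" by (metis imageI lessThan_iff)
    then show ?thesis by blast
  qed
qed auto

lemma split_int_interval0:
  assumes "B \<ge> 1"
  shows "{- int A..<int B} - {0} = (\<lambda>k. int k + 1) ` {..<B-1} \<union> (\<lambda>k. - int k - 1) ` {..<A}"
proof (intro equalityI subsetI)
  fix x assume "x \<in> {- int A..<int B} - {0}"
  then have x: "- int A \<le> x" "x < int B" "x \<noteq> 0" by auto
  show "x \<in> (\<lambda>k. int k + 1) ` {..<B-1} \<union> (\<lambda>k. - int k - 1) ` {..<A}"
  proof (cases "x > 0")
    case True
    then have "x = int (nat (x-1)) + 1" "nat (x-1) < B - 1" using x by auto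
    then have "x \<in> (\<lambda>k. int k + 1) ` {..<B-1}" by (metis imageI lessThan_iff)
    then show ?thesis by blast
  next
    case False
    then have "x = - int (nat (-x-1)) - 1" "nat (-x-1) < A" using x by auto
    then have "x \<in> (\<lambda>k. - int k - 1) ` {..<A}" by (metis imageI lessThan_iff)
    then show ?thesis by blast
  qed
qed (use assms in auto)

lemma prod_split_int:
  fixes f :: "int \<Rightarrow> real"
  shows "(\<Prod>x\<in>{- int A..<int B}. f x) = (\<Prod>k<B. f (int k)) * (\<Prod>k<A. f (- int k - 1))"
proof -
  have "(\<Prod>x\<in>{- int A..<int B}. f x) = (\<Prod>x\<in>int ` {..<B}. f x) * (\<Prod>x\<in>(\<lambda>k. - int k - 1) ` {..<A}. f x)"
    unfolding split_int_interval by (rule prod.union_disjoint) auto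
  also have "(\<Prod>x\<in>int ` {..<B}. f x) = (\<Prod>k<B. f (int k))" by (simp add: prod.reindex)
  also have "(\<Prod>x\<in>(\<lambda>k. - int k - 1) ` {..<A}. f x) = (\<Prod>k<A. f (- int k - 1))"
    by (subst prod.reindex) (auto simp: inj_on_def)
  finally show ?thesis .
qed

lemma sum_split_int:
  fixes f :: "int \<Rightarrow> real"
  shows "(\<Sum>x\<in>{- int A..<int B}. f x) = (\<Sum>k<B. f (int k)) + (\<Sum>k<A. f (- int k - 1))"
proof -
  have "(\<Sum>x\<in>{- int A..<int B}. f x) = (\<Sum>x\<in>int ` {..<B}. f x) + (\<Sum>x\<in>(\<lambda>k. - int k - 1) ` {..<A}. f x)"
    unfolding split_int_interval by (rule sum.union_disjoint) auto
  also have "(\<Sum>x\<in>int ` {..<B}. f x) = (\<Sum>k<B. f (int k))" by (simp add: sum.reindex)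
  also have "(\<Sum>x\<in>(\<lambda>k. - int k - 1) ` {..<A}. f x) = (\<Sum>k<A. f (- int k - 1))"
    by (subst sum.reindex) (auto simp: inj_on_def)
  finally show ?thesis .
qed

lemma prod_split_int0:
  fixes f :: "int \<Rightarrow> real"
  assumes "B \<ge> 1"
  shows "(\<Prod>x\<in>{- int A..<int B} - {0}. f x) = (\<Prod>k<B-1. f (int k + 1)) * (\<Prod>k<A. f (- int k - 1))"
proof -
  have "(\<Prod>x\<in>{- int A..<int B} - {0}. f x) = (\<Prod>x\<in>(\<lambda>k. int k + 1) ` {..<B-1}. f x) * (\<Prod>x\<in>(\<lambda>k. - int k - 1) ` {..<A}. f x)"
    unfolding split_int_interval0[OF assms] by (rule prod.union_disjoint) auto
  also have "(\<Prod>x\<in>(\<lambda>k. int k + 1) ` {..<B-1}. f x) = (\<Prod>k<B-1. f (int k + 1))"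
    by (subst prod.reindex) (auto simp: inj_on_def)
  also have "(\<Prod>x\<in>(\<lambda>k. - int k - 1) ` {..<A}. f x) = (\<Prod>k<A. f (- int k - 1))"
    by (subst prod.reindex) (auto simp: inj_on_def)
  finally show ?thesis .
qed

lemma negq:
  fixes q :: real assumes q: "q \<noteq> 0"
  shows "(\<Prod>k<A. 1 - q / (q^2)^(k+1)) = (-1)^A * fp q (q^2) A / q^(A*A)"
proof (induction A)
  case 0 then show ?case by simp
next
  case (Suc A)
  have e1: "(q^2)^(A+1) = q^(2*A+1) * q" "q * (q^2)^A = q^(2*A+1)"
    by (simp_all add: power_mult[symmetric] power_add[symmetric])
  have "Suc A * Suc A = A*A + (2*A+1)" by simp
  then have e2: "q^(Suc A * Suc A) = q^(A*A) * q^(2*A+1)"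
    by (simp only: power_add)
  have nz: "q^(2*A+1) \<noteq> 0" "q^(A*A) \<noteq> 0" using q by auto
  have "(\<Prod>k<Suc A. 1 - q / (q^2)^(k+1)) = ((-1)^A * fp q (q^2) A / q^(A*A)) * (1 - q/(q^2)^(A+1))"
    by (simp only: prod.lessThan_Suc Suc.IH)
  also have "1 - q/(q^2)^(A+1) = - (1 - q * (q^2)^A) / q^(2*A+1)"
    unfolding e1 using q nz by (simp add: field_simps)
  finally show ?case using nz unfolding e2 fp_Suc by (simp add: field_simps)
qed

lemma negp:
  fixes q :: real assumes q: "q \<noteq> 0"
  shows "(\<Prod>k<A. 1 - 1 / (q^2)^(k+1)) = (-1)^A * fp (q^2) (q^2) A / q^(A*(A+1))"
proof (induction A)
  case 0 then show ?case by simp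
next
  case (Suc A)
  have e1: "q^2 * (q^2)^A = (q^2)^(A+1)" by simp
  have "Suc A * (Suc A + 1) = A*(A+1) + 2*(A+1)" by simp
  then have e2: "q^(Suc A * (Suc A + 1)) = q^(A*(A+1)) * (q^2)^(A+1)"
    by (simp only: power_add power_mult)
  have nz: "(q^2)^(A+1) \<noteq> 0" "q^(A*(A+1)) \<noteq> 0" using q by auto
  have "(\<Prod>k<Suc A. 1 - 1 / (q^2)^(k+1)) = ((-1)^A * fp (q^2) (q^2) A / q^(A*(A+1))) * (1 - 1/(q^2)^(A+1))"
    by (simp only: prod.lessThan_Suc Suc.IH)
  also have "1 - 1/(q^2)^(A+1) = - (1 - q^2 * (q^2)^A) / (q^2)^(A+1)"
    unfolding e1 using q nz by (simp add: field_simps)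
  also have "((-1)^A * fp (q^2) (q^2) A / q^(A*(A+1))) * (- (1 - q^2 * (q^2)^A) / (q^2)^(A+1))
      = (-1)^(Suc A) * fp (q^2) (q^2) (Suc A) / q^(Suc A*(Suc A+1))"
    unfolding e2 fp_Suc using nz by (simp add: field_simps)
  finally show ?case .
qed


lemma pf_step_identity:
  fixes y a u b c :: real
  assumes "a \<noteq> 0" "u \<noteq> 0" "a \<noteq> u" "1 - y*a \<noteq> 0" "1 - y*u \<noteq> 0"
  shows "c/(1-y*u) * ((1-y*b)/(1-y*a)) =
     c*(1-b/u)/((1-y*u)*(1-a/u)) + (1-b/a)/(1-y*a) * (c/(1-u/a))"
proof -
  have ua: "u - a \<noteq> 0" using assms by auto
  have r1: "1-a/u = (u-a)/u" "1-u/a = -(u-a)/a" "1-b/u = (u-b)/u" "1-b/a = (a-b)/a"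
    using assms by (auto simp: field_simps)
  have key: "(u-b)*(1-y*a) - (a-b)*(1-y*u) = (u-a)*(1-y*b)" by (simp add: algebra_simps)
  have d1: "1-y*u \<noteq> 0" "1-y*a \<noteq> 0" using assms by auto
  have t1: "c*(1-b/u)/((1-y*u)*(1-a/u)) = c/(u-a) * ((u-b)/(1-y*u))"
    unfolding r1 using assms ua by (simp add: divide_simps)
  have t2: "(1-b/a)/(1-y*a) * (c/(1-u/a)) = - (c/(u-a) * ((a-b)/(1-y*a)))"
    unfolding r1 using assms ua by (simp add: divide_simps, simp add: algebra_simps)
  have "c*(1-b/u)/((1-y*u)*(1-a/u)) + (1-b/a)/(1-y*a) * (c/(1-u/a))
      = c/(u-a) * ((u-b)/(1-y*u) - (a-b)/(1-y*a))"
    unfolding t1 t2 by (simp add: right_diff_distrib)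
  also have "(u-b)/(1-y*u) - (a-b)/(1-y*a) = ((u-b)*(1-y*a) - (a-b)*(1-y*u))/((1-y*u)*(1-y*a))"
    using d1 by (rule diff_frac_eq)
  also have "\<dots> = (u-a)*(1-y*b)/((1-y*u)*(1-y*a))" by (simp only: key)
  finally show ?thesis using ua by simp
qed

lemma partial_fractions:
  fixes \<alpha> \<beta> :: "'i \<Rightarrow> real"
  assumes "finite S" "finite T" "card S = Suc (card T)" "inj_on \<alpha> S"
    "\<forall>s\<in>S. \<alpha> s \<noteq> 0" "\<forall>s\<in>S. 1 - y * \<alpha> s \<noteq> 0"
  shows "(\<Prod>t\<in>T. 1 - y * \<beta> t)/(\<Prod>s\<in>S. 1 - y * \<alpha> s) =
     (\<Sum>s\<in>S. (\<Prod>t\<in>T. 1 - \<beta> t/\<alpha> s)/((1 - y * \<alpha> s)*(\<Prod>s'\<in>S-{s}. 1 - \<alpha> s'/\<alpha> s)))"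
  using assms
proof (induction S arbitrary: T y rule: finite_induct)
  case empty then show ?case by simp
next
  case (insert a S)
  show ?case
  proof (cases "S = {}")
    case True
    with insert have "T = {}" by simp
    with True show ?thesis by simp
  next
    case False
    have "card S = card T" using insert by simp
    moreover have "card S > 0" using False insert(1) by (simp add: card_gt_0_iff)
    ultimately have "T \<noteq> {}" by auto
    then obtain b where b: "b \<in> T" by blast
    define T' where "T' = T - {b}"
    have T: "T = insert b T'" "b \<notin> T'" "finite T'" using b insert by (auto simp: T'_def)
    have cT': "card S = Suc (card T')" using insert T by simp
    have inj: "inj_on \<alpha> S" using insert by (auto simp: inj_on_def)
    have aS: "\<And>s. s \<in> S \<Longrightarrow> \<alpha> s \<noteq> \<alpha> a" using insert by (auto simp: inj_on_def)
    have nz: "\<forall>s\<in>S. \<alpha> s \<noteq> 0" "\<alpha> a \<noteq> 0" using insert by auto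
    have py: "\<forall>s\<in>S. 1 - y * \<alpha> s \<noteq> 0" "1 - y * \<alpha> a \<noteq> 0" using insert by auto
    have pa: "\<forall>s\<in>S. 1 - (1/\<alpha> a) * \<alpha> s \<noteq> 0" 
    proof
      fix s assume "s \<in> S"
      then have "\<alpha> s \<noteq> \<alpha> a" by (rule aS)
      then show "1 - (1/\<alpha> a) * \<alpha> s \<noteq> 0" using nz(2) by (simp add: field_simps)
    qed
    define c where "c s = (\<Prod>t\<in>T'. 1 - \<beta> t/\<alpha> s)/(\<Prod>s'\<in>S-{s}. 1 - \<alpha> s'/\<alpha> s)" for s
    have IH1: "(\<Prod>t\<in>T'. 1 - y * \<beta> t)/(\<Prod>s\<in>S. 1 - y * \<alpha> s) = (\<Sum>s\<in>S. c s/(1 - y * \<alpha> s))"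
      unfolding insert.IH[OF T(3) cT' inj nz(1) py(1)] c_def
      by (simp add: divide_divide_eq_left mult.commute)
    have IH2: "(\<Prod>t\<in>T'. 1 - \<beta> t/\<alpha> a)/(\<Prod>s\<in>S. 1 - \<alpha> s/\<alpha> a) = (\<Sum>s\<in>S. c s/(1 - \<alpha> s/\<alpha> a))"
      using insert.IH[OF T(3) cT' inj nz(1) pa] unfolding c_def
      by (simp add: divide_divide_eq_left mult.commute)
    have "(\<Prod>t\<in>T. 1 - y * \<beta> t)/(\<Prod>s\<in>insert a S. 1 - y * \<alpha> s)
        = (\<Prod>t\<in>T'. 1 - y * \<beta> t)/(\<Prod>s\<in>S. 1 - y * \<alpha> s) * ((1 - y * \<beta> b)/(1 - y * \<alpha> a))"
      using T insert(1,2) by (simp add: mult.commute)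
    also have "\<dots> = (\<Sum>s\<in>S. c s/(1 - y * \<alpha> s) * ((1 - y * \<beta> b)/(1 - y * \<alpha> a)))"
      by (simp add: IH1 sum_distrib_right sum_divide_distrib)
    also have "\<dots> = (\<Sum>s\<in>S. c s*(1-\<beta> b/\<alpha> s)/((1-y * \<alpha> s)*(1-\<alpha> a/\<alpha> s)) + (1-\<beta> b/\<alpha> a)/(1-y * \<alpha> a) * (c s/(1-\<alpha> s/\<alpha> a)))"
      apply (rule sum.cong[OF refl])
      subgoal for x
        apply (rule pf_step_identity)
        using nz py aS[of x] by (metis)+
      done
    also have "\<dots> = (\<Sum>s\<in>S. c s*(1-\<beta> b/\<alpha> s)/((1-y * \<alpha> s)*(1-\<alpha> a/\<alpha> s))) + (1-\<beta> b/\<alpha> a)/(1-y * \<alpha> a) * (\<Sum>s\<in>S. c s/(1-\<alpha> s/\<alpha> a))"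
      by (simp add: sum.distrib sum_distrib_left)
    also have "(\<Sum>s\<in>S. c s*(1-\<beta> b/\<alpha> s)/((1-y * \<alpha> s)*(1-\<alpha> a/\<alpha> s))) =
       (\<Sum>s\<in>S. (\<Prod>t\<in>T. 1 - \<beta> t/\<alpha> s)/((1 - y * \<alpha> s)*(\<Prod>s'\<in>insert a S-{s}. 1 - \<alpha> s'/\<alpha> s)))"
    proof (rule sum.cong[OF refl])
      fix s assume s: "s \<in> S"
      have "insert a S - {s} = insert a (S-{s})" using s insert(2) by auto
      then have "(\<Prod>s'\<in>insert a S-{s}. 1 - \<alpha> s'/\<alpha> s) = (1 - \<alpha> a/\<alpha> s) * (\<Prod>s'\<in>S-{s}. 1 - \<alpha> s'/\<alpha> s)"
        using insert(1,2) by simp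
      moreover have "(\<Prod>t\<in>T. 1 - \<beta> t/\<alpha> s) = (1 - \<beta> b/\<alpha> s) * (\<Prod>t\<in>T'. 1 - \<beta> t/\<alpha> s)"
        using T by simp
      ultimately show "c s*(1-\<beta> b/\<alpha> s)/((1-y * \<alpha> s)*(1-\<alpha> a/\<alpha> s)) =
        (\<Prod>t\<in>T. 1 - \<beta> t/\<alpha> s)/((1 - y * \<alpha> s)*(\<Prod>s'\<in>insert a S-{s}. 1 - \<alpha> s'/\<alpha> s))"
        unfolding c_def by (simp add: ac_simps)
    qed
    also have "(1-\<beta> b/\<alpha> a)/(1-y * \<alpha> a) * (\<Sum>s\<in>S. c s/(1-\<alpha> s/\<alpha> a)) =
        (\<Prod>t\<in>T. 1 - \<beta> t/\<alpha> a)/((1 - y * \<alpha> a)*(\<Prod>s'\<in>insert a S-{a}. 1 - \<alpha> s'/\<alpha> a))"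
    proof -
      have "insert a S - {a} = S" using insert(2) by auto
      moreover have "(\<Prod>t\<in>T. 1 - \<beta> t/\<alpha> a) = (1 - \<beta> b/\<alpha> a) * (\<Prod>t\<in>T'. 1 - \<beta> t/\<alpha> a)"
        using T by simp
      ultimately show ?thesis unfolding IH2[symmetric] by (simp add: ac_simps)
    qed
    finally show ?thesis using insert(1,2) by (simp add: add.commute)
  qed
qed


lemma shift_prod_int:
  fixes g :: "int \<Rightarrow> real"
  shows "(\<Prod>k\<in>{a..<b} - {c}. g (k - m)) = (\<Prod>e\<in>{a-m..<b-m} - {c - m}. g e)"
  by (rule prod.reindex_bij_witness[of _ "\<lambda>e. e + m" "\<lambda>k. k - m"]) auto

lemma shift_prod_int':
  fixes g :: "int \<Rightarrow> real"
  shows "(\<Prod>k\<in>{a..<b}. g (k - m)) = (\<Prod>e\<in>{a-m..<b-m}. g e)"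
  by (rule prod.reindex_bij_witness[of _ "\<lambda>e. e + m" "\<lambda>k. k - m"]) auto

lemma powi_ne1:
  fixes q :: real assumes "0 < q" "q < 1" "n \<noteq> 0"
  shows "q powi n \<noteq> 1"
proof (cases "n > 0")
  case True
  then have "q powi n < q powi 0" using assms by (intro power_int_strict_decreasing) auto
  then show ?thesis by simp
next
  case False
  then have "n < 0" using assms by simp
  then have "q powi 0 < q powi n" using assms by (intro power_int_strict_decreasing) auto
  then show ?thesis by simp
qed

lemma fp_pos:
  fixes a p :: real
  assumes "0 \<le> a" "a < 1" "0 \<le> p" "p \<le> 1"
  shows "fp a p j > 0"
  unfolding fp_def
proof (rule prod_pos)
  fix k assume "k \<in> {..<j}"
  have "p ^ k \<le> 1" using assms by (simp add: power_le_one)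
  then have "a * p ^ k \<le> a" using assms by (simp add: mult_left_le)
  then show "0 < 1 - a * p ^ k" using assms by simp
qed

lemma alg1:
  fixes s x F1 F2 G1 G2 Q R :: real
  assumes "s \<noteq> 0" "x \<noteq> 0" "x \<noteq> 1" "G1 \<noteq> 0" "G2 \<noteq> 0" "Q \<noteq> 0" "R \<noteq> 0"
  shows "(F1 * (s * F2 / Q) / (1 - 1/x)) / ((1-x) * (G1 * (s * G2 / (Q * R)))) = - R * x * F2 * F1 / ((1-x)^2 * G2 * G1)"
proof -
  define D where "D = 1 - x"
  have D0: "D \<noteq> 0" using assms by (simp add: D_def)
  have a: "1 - 1/x = - D/x" using assms by (simp add: D_def field_simps)
  show ?thesis unfolding a D_def[symmetric] using assms D0 by (simp add: field_simps power2_eq_square)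
qed

lemma alg2:
  fixes s P1 P2 F Q R :: real
  assumes "s \<noteq> 0" "F \<noteq> 0" "Q \<noteq> 0" "R \<noteq> 0"
  shows "(P1 * (s * P2 / Q)) / (F * ((-s) * F / (Q * R))) = - R * P1 * P2 / F^2"
  using assms by (simp add: field_simps power2_eq_square)

definition Tp :: "real \<Rightarrow> nat \<Rightarrow> nat \<Rightarrow> real" where
  "Tp q N k = q^(3*k+1) * fp q (q^2) (N+k) * fp q (q^2) (N-k) /
     ((1 - q^(2*k+1))^2 * fp (q^2) (q^2) (N+k) * fp (q^2) (q^2) (N-k-1))"

definition Tm :: "real \<Rightarrow> nat \<Rightarrow> nat \<Rightarrow> real" where
  "Tm q N k = q^k * fp q (q^2) (N-k-1) * fp q (q^2) (N+k+1) /
     ((1 - q^(2*k+1))^2 * fp (q^2) (q^2) (N-k-1) * fp (q^2) (q^2) (N+k))"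

context
  fixes q :: real
  assumes q0: "0 < q" and q1: "q < 1"
begin

lemma qnz: "q \<noteq> 0" using q0 by simp

lemma fpq_pos: "fp q (q^2) j > 0"
  using q0 q1 by (intro fp_pos) (auto simp: power_le_one)

lemma fpp_pos: "fp (q^2) (q^2) j > 0"
  using q0 q1 by (intro fp_pos) (auto simp: power_le_one power_less_one_iff)

lemma c1: "q powi (2 * int k + 1) = q * (q^2)^k"
proof -
  have "2 * int k + 1 = int (2*k+1)" by simp
  then have "q powi (2 * int k + 1) = q^(2*k+1)" by (simp only: power_int_of_nat)
  then show ?thesis by (simp add: power_mult)
qed

lemma c2: "q powi (2 * (- int k - 1) + 1) = q / (q^2)^(k+1)"
proof -
  have e: "2 * (- int k - 1) + 1 = - int (2*k+1)" by simp
  have "q powi (2 * (- int k - 1) + 1) = q powi (- int (2*k+1))" by (simp only: e)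
  also have "\<dots> = 1 / q^(2*k+1)" by (simp only: power_int_minus_divide power_int_of_nat)
  also have "\<dots> = q / (q^2)^(k+1)"
  proof -
    have "2*(k+1) = Suc (2*k+1)" by simp
    then have "(q^2)^(k+1) = q * q^(2*k+1)" by (simp only: power_mult[symmetric] power_Suc)
    then show ?thesis using qnz by simp
  qed
  finally show ?thesis .
qed

lemma c3: "q powi (2 * (int k + 1)) = q^2 * (q^2)^k"
proof -
  have "2 * (int k + 1) = int (2*(k+1))" by simp
  then have "q powi (2 * (int k + 1)) = q^(2*(k+1))" by (simp only: power_int_of_nat)
  then show ?thesis by (simp add: power_mult[symmetric] power_add[symmetric])
qed

lemma c4: "q powi (2 * (- int k - 1)) = 1 / (q^2)^(k+1)"
proof -
  have e: "2 * (- int k - 1) = - int (2*(k+1))" by simp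
  have "q powi (2 * (- int k - 1)) = q powi (- int (2*(k+1)))" by (simp only: e)
  also have "\<dots> = 1 / q^(2*(k+1))" by (simp only: power_int_minus_divide power_int_of_nat)
  finally show ?thesis by (simp add: power_mult power2_eq_square)
qed

lemma pdiv1: "q powi (2*k+1) / q powi (2*m) = q powi (2*(k-m)+1)"
proof -
  have e: "2*(k-m)+1 = (2*k+1) - 2*m" by simp
  show ?thesis unfolding e using qnz by (simp add: power_int_diff)
qed

lemma pdiv0: "q powi (2*k) / q powi (2*m) = q powi (2*(k-m))"
proof -
  have e: "2*(k-m) = 2*k - 2*m" by simp
  show ?thesis unfolding e using qnz by (simp add: power_int_diff)
qed

lemma num_whole:
  fixes A B :: nat
  shows "(\<Prod>e\<in>{- int A..<int B}. 1 - q powi (2*e+1)) = fp q (q^2) B * ((-1)^A * fp q (q^2) A / q^(A*A))"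
proof -
  have "(\<Prod>e\<in>{- int A..<int B}. 1 - q powi (2*e+1)) =
     (\<Prod>k<B. 1 - q powi (2*int k+1)) * (\<Prod>k<A. 1 - q powi (2*(- int k - 1)+1))"
    by (rule prod_split_int)
  also have "(\<Prod>k<B. 1 - q powi (2*int k+1)) = fp q (q^2) B" unfolding fp_def c1 ..
  also have "(\<Prod>k<A. 1 - q powi (2*(- int k - 1)+1)) = (\<Prod>k<A. 1 - q / (q^2)^(k+1))" unfolding c2 ..
  also have "\<dots> = (-1)^A * fp q (q^2) A / q^(A*A)" by (rule negq[OF qnz])
  finally show ?thesis .
qed

lemma den_whole:
  fixes A B :: nat
  assumes "B \<ge> 1"
  shows "(\<Prod>e\<in>{- int A..<int B} - {0}. 1 - q powi (2*e)) = fp (q^2) (q^2) (B-1) * ((-1)^A * fp (q^2) (q^2) A / q^(A*(A+1)))"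
proof -
  have "(\<Prod>e\<in>{- int A..<int B} - {0}. 1 - q powi (2*e)) =
     (\<Prod>k<B-1. 1 - q powi (2*(int k + 1))) * (\<Prod>k<A. 1 - q powi (2*(- int k - 1)))"
    by (rule prod_split_int0[OF assms])
  also have "(\<Prod>k<B-1. 1 - q powi (2*(int k + 1))) = fp (q^2) (q^2) (B-1)" unfolding fp_def c3 ..
  also have "(\<Prod>k<A. 1 - q powi (2*(- int k - 1))) = (\<Prod>k<A. 1 - 1 / (q^2)^(k+1))" unfolding c4 ..
  also have "\<dots> = (-1)^A * fp (q^2) (q^2) A / q^(A*(A+1))" by (rule negp[OF qnz])
  finally show ?thesis .
qed


lemma term_formula:
  fixes N A B :: nat and m :: int
  assumes hA: "int A = int N + m" and hB: "int B = int N - m" and B1: "B \<ge> 1"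
  shows "(\<Prod>k\<in>{- int N..<int N} - {-1}. 1 - (q powi (2*k+1)) / (q powi (2*m))) /
       ((1 - q * (q powi (2*m))) * (\<Prod>m'\<in>{- int N..<int N} - {m}. 1 - (q powi (2*m')) / (q powi (2*m))))
     = - (q^A) * (q powi (2*m+1)) * fp q (q^2) A * fp q (q^2) B /
       ((1 - (q powi (2*m+1)))^2 * fp (q^2) (q^2) A * fp (q^2) (q^2) (B-1))"
proof -
  define x where "x = (q powi (2*m+1))"
  have h1: "- int N - m = - int A" "int N - m = int B" using hA hB by simp_all
  have xnz: "x \<noteq> 0" unfolding x_def using qnz by simp
  have odd: "2*m+1 \<noteq> 0" by presburger
  have x1: "x \<noteq> 1" unfolding x_def using q0 q1 odd by (intro powi_ne1) auto
  have mem: "-1 - m \<in> {- int A..<int B}" using hA hB B1 by auto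
  have N1: "(\<Prod>k\<in>{- int N..<int N} - {-1}. 1 - (q powi (2*k+1)) / (q powi (2*m))) =
      (\<Prod>k\<in>{- int N..<int N} - {-1}. (\<lambda>e. 1 - (q powi (2*e+1))) (k - m))"
    by (simp add: pdiv1)
  also have "\<dots> = (\<Prod>e\<in>{- int A..<int B} - {-1 - m}. 1 - (q powi (2*e+1)))"
    using shift_prod_int[where g="\<lambda>e. 1 - (q powi (2*e+1))" and a="- int N" and b="int N" and c="-1" and m="m"] by (simp only: h1)
  finally have N1: "(\<Prod>k\<in>{- int N..<int N} - {-1}. 1 - (q powi (2*k+1)) / (q powi (2*m))) =
      (\<Prod>e\<in>{- int A..<int B} - {-1 - m}. 1 - (q powi (2*e+1)))" .
  have rem: "(\<Prod>e\<in>{- int A..<int B}. 1 - (q powi (2*e+1))) =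
     (1 - (q powi (2*(-1-m)+1))) * (\<Prod>e\<in>{- int A..<int B} - {-1 - m}. 1 - (q powi (2*e+1)))"
    using mem by (intro prod.remove) auto
  have g: "(q powi (2*(-1-m)+1)) = 1/x"
  proof -
    have e: "2*(-1-m)+1 = - (2*m+1)" by simp
    show ?thesis unfolding x_def by (simp only: e power_int_minus_divide)
  qed
  have gnz: "1 - 1/x \<noteq> 0" using x1 xnz by (simp add: field_simps)
  have Veq: "fp q (q^2) B * ((-1)^A * fp q (q^2) A / q^(A*A)) =
      (1 - 1/x) * (\<Prod>e\<in>{- int A..<int B} - {-1 - m}. 1 - (q powi (2*e+1)))"
    using rem unfolding g num_whole .
  have N2: "(\<Prod>e\<in>{- int A..<int B} - {-1 - m}. 1 - (q powi (2*e+1))) =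
      fp q (q^2) B * ((-1)^A * fp q (q^2) A / q^(A*A)) / (1 - 1/x)"
    unfolding Veq using gnz by (metis nonzero_mult_div_cancel_left)
  have D1: "(\<Prod>m'\<in>{- int N..<int N} - {m}. 1 - (q powi (2*m')) / (q powi (2*m))) =
      (\<Prod>m'\<in>{- int N..<int N} - {m}. (\<lambda>d. 1 - (q powi (2*d))) (m' - m))"
    by (simp add: pdiv0)
  also have "\<dots> = (\<Prod>d\<in>{- int A..<int B} - {0}. 1 - (q powi (2*d)))"
    using shift_prod_int[where g="\<lambda>d. 1 - (q powi (2*d))" and a="- int N" and b="int N" and c="m" and m="m"] by (simp only: h1 diff_self)
  also have "\<dots> = fp (q^2) (q^2) (B-1) * ((-1)^A * fp (q^2) (q^2) A / q^(A*(A+1)))"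
    by (rule den_whole[OF B1])
  finally have D1: "(\<Prod>m'\<in>{- int N..<int N} - {m}. 1 - (q powi (2*m')) / (q powi (2*m))) =
      fp (q^2) (q^2) (B-1) * ((-1)^A * fp (q^2) (q^2) A / q^(A*(A+1)))" .
  have qx: "q * (q powi (2*m)) = x" unfolding x_def using qnz by (simp add: power_int_add_1')
  have qA: "q^(A*(A+1)) = q^(A*A) * q^A" by (simp add: power_add[symmetric] algebra_simps)
  show ?thesis
    unfolding N1 N2 D1 qx qA x_def[symmetric]
    using fpq_pos[of A] fpq_pos[of B] fpp_pos[of A] fpp_pos[of "B-1"] qnz xnz x1
    by (intro alg1) auto
qed

lemma lhs_formula:
  fixes n :: nat
  shows "(\<Prod>k\<in>{- int (Suc n)..<int (Suc n)} - {-1}. 1 - q * (q powi (2*k+1))) /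
         (\<Prod>m\<in>{- int (Suc n)..<int (Suc n)}. 1 - q * (q powi (2*m)))
       = - (q^(Suc n)) * fp (q^2) (q^2) (Suc n) * fp (q^2) (q^2) n / (fp q (q^2) (Suc n))^2"
proof -
  have "(\<Prod>k\<in>{- int (Suc n)..<int (Suc n)} - {-1}. 1 - q * (q powi (2*k+1))) =
      (\<Prod>k\<in>{- int (Suc n)..<int (Suc n)} - {-1}. (\<lambda>e. 1 - (q powi (2*e))) (k - (-1)))"
  proof (rule prod.cong[OF refl])
    fix k :: int
    have "q * (q powi (2*k+1)) = q powi ((2*k+1)+1)" by (rule power_int_add_1'[symmetric]) (use qnz in simp)
    also have "(2*k+1)+1 = 2*(k - (-1))" by simp
    finally show "1 - q * (q powi (2*k+1)) = (\<lambda>e. 1 - (q powi (2*e))) (k - (-1))" by simp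
  qed
  also have "\<dots> = (\<Prod>e\<in>{- int n..<int (Suc (Suc n))} - {0}. 1 - (q powi (2*e)))"
  proof -
    have e: "- int (Suc n) - -1 = - int n" "int (Suc n) - -1 = int (Suc (Suc n))" "(-1::int) - -1 = 0" by simp_all
    show ?thesis using shift_prod_int[where g="\<lambda>e. 1 - (q powi (2*e))" and a="- int (Suc n)" and b="int (Suc n)" and c="-1" and m="-1"] by (simp only: e)
  qed
  also have "\<dots> = fp (q^2) (q^2) (Suc n) * ((-1)^n * fp (q^2) (q^2) n / q^(n*(n+1)))"
    using den_whole[of "Suc (Suc n)" n] by simp
  finally have A1: "(\<Prod>k\<in>{- int (Suc n)..<int (Suc n)} - {-1}. 1 - q * (q powi (2*k+1))) =
      fp (q^2) (q^2) (Suc n) * ((-1)^n * fp (q^2) (q^2) n / q^(n*(n+1)))" .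
  have "(\<Prod>m\<in>{- int (Suc n)..<int (Suc n)}. 1 - q * (q powi (2*m))) =
        (\<Prod>m\<in>{- int (Suc n)..<int (Suc n)}. 1 - (q powi (2*m+1)))"
    using qnz by (simp add: power_int_add_1')
  also have "\<dots> = fp q (q^2) (Suc n) * ((- ((-1)^n)) * fp q (q^2) (Suc n) / (q^(n*(n+1)) * q^(Suc n)))"
  proof -
    have "q^(Suc n * Suc n) = q^(n*(n+1)) * q^(Suc n)" by (simp add: power_add[symmetric] algebra_simps)
    then show ?thesis unfolding num_whole by simp
  qed
  finally have A2: "(\<Prod>m\<in>{- int (Suc n)..<int (Suc n)}. 1 - q * (q powi (2*m))) =
      fp q (q^2) (Suc n) * ((- ((-1)^n)) * fp q (q^2) (Suc n) / (q^(n*(n+1)) * q^(Suc n)))" .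
  show ?thesis unfolding A1 A2
    using fpq_pos[of "Suc n"] qnz by (intro alg2) auto
qed

end


lemma alg3:
  fixes X1 X2 Y1 Y2 a b c :: real
  assumes "X1 * X2 = Y1 * Y2"
  shows "- X1 * X2 * a * b / c = - Y1 * (Y2 * a * b / c)"
proof -
  have "- X1 * X2 * a * b / c = - (X1 * X2) * (a * b / c)" by (simp add: mult.assoc)
  also have "\<dots> = - (Y1 * Y2) * (a * b / c)" using assms by simp
  also have "\<dots> = - Y1 * (Y2 * a * b / c)" by (simp add: mult.assoc)
  finally show ?thesis .
qed

lemma alg4:
  fixes Z y Y1 Y2 a b c d :: real
  assumes "y \<noteq> 0" "y \<noteq> 1" "c \<noteq> 0" "d \<noteq> 0" "Z * y = Y1 * Y2"
  shows "- Z * (1/y) * a * b / ((1 - 1/y)^2 * c * d) = - Y1 * (Y2 * a * b / ((1 - y)^2 * c * d))"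
proof -
  define D where "D = 1 - y"
  have D0: "D \<noteq> 0" using assms by (simp add: D_def)
  have e: "1 - 1/y = - D / y" using assms by (simp add: D_def field_simps)
  have "- Z * (1/y) * a * b / ((1 - 1/y)^2 * c * d) = - (Z * y) * a * b / (D^2 * c * d)"
    unfolding e using assms D0 by (simp add: field_simps power2_eq_square)
  also have "\<dots> = - Y1 * (Y2 * a * b / ((1 - y)^2 * c * d))"
    unfolding assms(5) D_def by (simp add: mult.assoc)
  finally show ?thesis .
qed

context
  fixes q :: real
  assumes q0: "0 < q" and q1: "q < 1"
begin

lemma inj_powi2: "inj (\<lambda>m::int. q powi (2*m))"
proof (rule injI)
  fix m m' :: int assume eq: "q powi (2*m) = q powi (2*m')"
  show "m = m'"
  proof (rule ccontr)
    assume "m \<noteq> m'"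
    then consider "m < m'" | "m' < m" by linarith
    then show False
    proof cases
      case 1
      then have "q powi (2*m') < q powi (2*m)" using q0 q1 by (intro power_int_strict_decreasing) auto
      then show False using eq by simp
    next
      case 2
      then have "q powi (2*m) < q powi (2*m')" using q0 q1 by (intro power_int_strict_decreasing) auto
      then show False using eq by simp
    qed
  qed
qed

lemma pk: "q powi (2 * int k + 1) = q^(2*k+1)"
proof -
  have "2 * int k + 1 = int (2*k+1)" by simp
  then show ?thesis by (simp only: power_int_of_nat)
qed

lemma pk2: "q powi (2 * (- int k - 1) + 1) = 1 / q^(2*k+1)"
proof -
  have e: "2 * (- int k - 1) + 1 = - int (2*k+1)" by simp
  show ?thesis by (simp only: e power_int_minus_divide power_int_of_nat)
qed

lemma finite_identity:
  "fp (q^2) (q^2) (Suc n) * fp (q^2) (q^2) n / (fp q (q^2) (Suc n))^2 =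
     (\<Sum>k<Suc n. Tp q (Suc n) k + Tm q (Suc n) k)"
proof -
  define N where "N = Suc n"
  define S where "S = {- int N..<int N}"
  have qnz: "q \<noteq> 0" using q0 by simp
  have m1: "-1 \<in> S" unfolding S_def N_def by simp
  have cS: "card S = 2 * N" unfolding S_def by simp
  have cT: "card (S - {-1}) = card S - 1" using m1 unfolding S_def by (simp add: card_Diff_singleton)
  have cST: "card S = Suc (card (S - {-1}))" using cS cT unfolding N_def by simp
  have inj: "inj_on (\<lambda>m. q powi (2*m)) S" using inj_powi2 by (simp add: inj_on_def inj_def)
  have nz: "\<forall>j\<in>S. q powi (2*j) \<noteq> 0" using qnz by simp
  have ny: "\<forall>j\<in>S. 1 - q * (q powi (2*j)) \<noteq> 0"
  proof
    fix j assume "j \<in> S"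
    have "q * (q powi (2*j)) = q powi (2*j+1)" by (rule power_int_add_1'[symmetric]) (use qnz in simp)
    moreover have "2*j+1 \<noteq> 0" by presburger
    ultimately show "1 - q * (q powi (2*j)) \<noteq> 0" using q0 q1 powi_ne1 by simp
  qed
  have finS: "finite S" "finite (S - {-1})" by (simp_all add: S_def)
  have PFi: "(\<Prod>k\<in>S - {-1}. 1 - q * (q powi (2*k+1))) / (\<Prod>m\<in>S. 1 - q * (q powi (2*m))) =
     (\<Sum>m\<in>S. (\<Prod>k\<in>S - {-1}. 1 - (q powi (2*k+1)) / (q powi (2*m))) /
       ((1 - q * (q powi (2*m))) * (\<Prod>m'\<in>S - {m}. 1 - (q powi (2*m')) / (q powi (2*m)))))"
    by (rule partial_fractions[OF finS(1) finS(2) cST inj nz ny])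
  define f where "f m = (\<Prod>k\<in>S - {-1}. 1 - (q powi (2*k+1)) / (q powi (2*m))) /
       ((1 - q * (q powi (2*m))) * (\<Prod>m'\<in>S - {m}. 1 - (q powi (2*m')) / (q powi (2*m))))" for m
  have fp1: "f (int k) = - (q^N) * Tp q N k" if k: "k < N" for k
  proof -
    have "f (int k) = - (q^(N+k)) * (q powi (2*int k+1)) * fp q (q^2) (N+k) * fp q (q^2) (N-k) /
       ((1 - (q powi (2*int k+1)))^2 * fp (q^2) (q^2) (N+k) * fp (q^2) (q^2) (N-k-1))"
      unfolding f_def S_def using k by (intro term_formula q0 q1) auto
    also have "\<dots> = - (q^N) * Tp q N k"
      unfolding pk Tp_def
    proof (rule alg3)
      have "N + k + (2*k+1) = N + (3*k+1)" by simp
      then show "q^(N+k) * q^(2*k+1) = q^N * q^(3*k+1)" by (simp only: power_add[symmetric])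
    qed
    finally show ?thesis .
  qed
  have fp2: "f (- int k - 1) = - (q^N) * Tm q N k" if k: "k < N" for k
  proof -
    have nk: "N + k + 1 - 1 = N + k" by simp
    have "f (- int k - 1) = - (q^(N-k-1)) * (q powi (2*(- int k - 1)+1)) * fp q (q^2) (N-k-1) * fp q (q^2) (N+k+1) /
       ((1 - (q powi (2*(- int k - 1)+1)))^2 * fp (q^2) (q^2) (N-k-1) * fp (q^2) (q^2) (N+k+1-1))"
      unfolding f_def S_def using k by (intro term_formula q0 q1) auto
    also have "\<dots> = - (q^N) * Tm q N k"
      unfolding pk2 Tm_def nk
    proof (rule alg4)
      show "q^(2*k+1) \<noteq> 0" using qnz by simp
      show "q^(2*k+1) \<noteq> 1" using power_Suc_less_one[OF q0 q1, of "2*k"] by simp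
      show "fp (q^2) (q^2) (N-k-1) \<noteq> 0" using fpp_pos[OF q0 q1] by (metis less_irrefl)
      show "fp (q^2) (q^2) (N+k) \<noteq> 0" using fpp_pos[OF q0 q1] by (metis less_irrefl)
      show "q^(N-k-1) * q^(2*k+1) = q^N * q^k"
      proof -
        have "N-k-1 + (2*k+1) = N + k" using k by simp
        then show ?thesis by (simp only: power_add[symmetric])
      qed
    qed
    finally show ?thesis .
  qed
  have "- (q^N) * (fp (q^2) (q^2) N * fp (q^2) (q^2) n / (fp q (q^2) N)^2) =
        (\<Sum>m\<in>S. f m)"
    using PFi lhs_formula[OF q0 q1, of n] unfolding f_def S_def N_def by simp
  also have "\<dots> = (\<Sum>k<N. f (int k)) + (\<Sum>k<N. f (- int k - 1))"
    unfolding S_def by (rule sum_split_int)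
  also have "\<dots> = (\<Sum>k<N. - (q^N) * Tp q N k) + (\<Sum>k<N. - (q^N) * Tm q N k)"
    using fp1 fp2 by simp
  also have "\<dots> = - (q^N) * (\<Sum>k<N. Tp q N k + Tm q N k)"
    by (simp add: sum_distrib_left sum.distrib algebra_simps)
  finally have "- (q^N) * (fp (q^2) (q^2) N * fp (q^2) (q^2) n / (fp q (q^2) N)^2) =
     - (q^N) * (\<Sum>k<N. Tp q N k + Tm q N k)" .
  moreover have "- (q^N) \<noteq> 0" using qnz by simp
  ultimately have "fp (q^2) (q^2) N * fp (q^2) (q^2) n / (fp q (q^2) N)^2 = (\<Sum>k<N. Tp q N k + Tm q N k)"
    by (metis mult_cancel_left)
  then show ?thesis unfolding N_def .
qed

end


lemma fp_conv:
  fixes a p :: real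
  assumes "0 \<le> a" "a < 1" "0 \<le> p" "p < 1"
  shows "convergent_prod (\<lambda>k. 1 - a * p^k)"
proof -
  have "summable (\<lambda>k. a * p^k)" using assms by (intro summable_mult summable_geometric) auto
  moreover have "norm ((1 - a * p^k) - 1) = a * p^k" for k using assms by simp
  ultimately have "summable (\<lambda>k. norm ((1 - a * p^k) - 1))" by simp
  then show ?thesis
    by (intro abs_convergent_prod_imp_convergent_prod summable_imp_abs_convergent_prod)
qed

lemma fp_lim:
  fixes a p :: real
  assumes "0 \<le> a" "a < 1" "0 \<le> p" "p < 1"
  shows "(\<lambda>j. fp a p j) \<longlonglongrightarrow> (\<Prod>k. 1 - a * p^k)"
proof (rule LIMSEQ_imp_Suc)
  have "(\<lambda>n. \<Prod>i\<le>n. 1 - a * p^i) \<longlonglongrightarrow> (\<Prod>k. 1 - a * p^k)"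
    by (rule convergent_prod_LIMSEQ[OF fp_conv[OF assms]])
  moreover have "fp a p (Suc n) = (\<Prod>i\<le>n. 1 - a * p^i)" for n
    by (simp add: fp_def lessThan_Suc_atMost)
  ultimately show "(\<lambda>n. fp a p (Suc n)) \<longlonglongrightarrow> (\<Prod>k. 1 - a * p^k)" by simp
qed

lemma fp_le1:
  fixes a p :: real
  assumes "0 \<le> a" "a < 1" "0 \<le> p" "p \<le> 1"
  shows "fp a p j \<le> 1"
  unfolding fp_def
proof (rule prod_le_1)
  fix k assume "k \<in> {..<j}"
  have "p ^ k \<le> 1" using assms by (simp add: power_le_one)
  then have "a * p ^ k \<le> a" using assms by (simp add: mult_left_le)
  then show "0 \<le> 1 - a * p ^ k \<and> 1 - a * p ^ k \<le> 1" using assms by simp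
qed

lemma fp_dec:
  fixes a p :: real
  assumes "0 \<le> a" "a < 1" "0 \<le> p" "p \<le> 1"
  shows "decseq (\<lambda>j. fp a p j)"
proof (rule decseq_SucI)
  fix j
  have "0 < fp a p j" using assms by (rule fp_pos)
  moreover have "0 \<le> a * p^j" using assms by simp
  ultimately show "fp a p (Suc j) \<le> fp a p j" unfolding fp_Suc
    by (simp add: mult_left_le)
qed

lemma fp_lim_pos:
  fixes a p :: real
  assumes "0 \<le> a" "a < 1" "0 \<le> p" "p < 1"
  shows "(\<Prod>k. 1 - a * p^k) > 0"
proof -
  have nz: "1 - a * p^k \<noteq> 0" for k
  proof -
    have "p ^ k \<le> 1" using assms by (simp add: power_le_one)
    then have "a * p ^ k \<le> a" using assms by (simp add: mult_left_le)
    then show ?thesis using assms by simp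
  qed
  have "(\<Prod>k. 1 - a * p^k) \<noteq> 0" by (rule prodinf_nonzero[OF fp_conv[OF assms] nz])
  moreover have "0 \<le> (\<Prod>k. 1 - a * p^k)"
    using fp_lim[OF assms] by (rule LIMSEQ_le_const) (use fp_pos[of a p] assms in \<open>auto intro: less_imp_le\<close>)
  ultimately show ?thesis by simp
qed

lemma fp_ge_lim:
  fixes a p :: real
  assumes "0 \<le> a" "a < 1" "0 \<le> p" "p < 1"
  shows "(\<Prod>k. 1 - a * p^k) \<le> fp a p j"
  using fp_dec[of a p] fp_lim[OF assms] assms by (intro decseq_ge) auto

lemma lim_minus:
  fixes X :: "nat \<Rightarrow> real"
  assumes "X \<longlonglongrightarrow> L"
  shows "(\<lambda>N. X (N - c)) \<longlonglongrightarrow> L"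
  using filterlim_compose[OF assms filterlim_minus_const_nat_at_top] .

lemma lim_plus:
  fixes X :: "nat \<Rightarrow> real"
  assumes "X \<longlonglongrightarrow> L"
  shows "(\<lambda>N. X (N + c)) \<longlonglongrightarrow> L"
  using LIMSEQ_ignore_initial_segment[OF assms] .


lemma alg5:
  fixes y c L P :: real
  assumes "1 - y > 0" "P > 0"
  shows "y * c * L * L / ((1-y)^2 * P * P) + c * L * L / ((1-y)^2 * P * P) = L^2 / P^2 * ((1+y) * c / (1-y)^2)"
proof -
  define D where "D = (1-y)^2"
  have D0: "D \<noteq> 0" using assms by (simp add: D_def)
  show ?thesis unfolding D_def[symmetric] using D0 assms by (simp add: field_simps power2_eq_square)
qed

context
  fixes q :: real
  assumes q0: "0 < q" and q1: "q < 1"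
begin

lemma pq3: "q^(3*k+1) = q * (q^3)^k"
proof -
  have "3*k+1 = Suc (3*k)" by simp
  then show ?thesis by (simp only: power_Suc power_mult)
qed

lemma main_sum:
  defines "Lq \<equiv> (\<Prod>k. 1 - q * (q^2)^k)" and "Lp \<equiv> (\<Prod>k. 1 - q^2 * (q^2)^k)"
  shows "(\<lambda>n. (1 + q ^ (2*n+1)) * q ^ n / (1 - q ^ (2*n+1))\<^sup>2) sums (Lp^4 / Lq^4)"
proof -
  have a0: "0 \<le> q" "q < 1" "0 \<le> q^2" "q^2 < 1" using q0 q1 by (auto simp: power_less_one_iff)
  have limq: "(\<lambda>j. fp q (q^2) j) \<longlonglongrightarrow> Lq" unfolding Lq_def using a0 by (intro fp_lim) auto
  have limp: "(\<lambda>j. fp (q^2) (q^2) j) \<longlonglongrightarrow> Lp" unfolding Lp_def using a0 by (intro fp_lim) auto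
  have Lq0: "Lq > 0" unfolding Lq_def using a0 by (intro fp_lim_pos) auto
  have Lp0: "Lp > 0" unfolding Lp_def using a0 by (intro fp_lim_pos) auto
  have Fq1: "fp q (q^2) j \<le> 1" for j using a0 by (intro fp_le1) auto
  have Fq0: "fp q (q^2) j > 0" for j using a0 by (intro fp_pos) auto
  have Gp: "Lp \<le> fp (q^2) (q^2) j" for j unfolding Lp_def using a0 by (intro fp_ge_lim) auto
  define s where "s = (\<lambda>k::nat. (1 + q ^ (2*k+1)) * q ^ k / (1 - q ^ (2*k+1))\<^sup>2)"
  define C where "C = Lq^2 / Lp^2"
  define W where "W = (1-q)^2 * Lp * Lp"
  have W0: "W > 0" unfolding W_def using Lp0 q1 by simp
  define a where "a k N = (if k < N then Tp q N k + Tm q N k else 0)" for k N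
  define M where "M k = q * (q^3)^k / W + q^k / W" for k
  have y1: "1 - q^(2*k+1) > 0" for k using power_Suc_less_one[OF q0 q1, of "2*k"] by simp
  have y2: "(1-q)^2 \<le> (1 - q^(2*k+1))^2" for k
  proof -
    have "q^(2*k+1) \<le> q^1" using a0 by (intro power_decreasing) auto
    then show ?thesis using q1 by (intro power_mono) auto
  qed
  have Wle: "W \<le> (1 - q^(2*k+1))^2 * fp (q^2) (q^2) i * fp (q^2) (q^2) j" for k i j
  proof -
    have g0: "0 \<le> fp (q^2) (q^2) i" using Gp[of i] Lp0 by linarith
    have inner: "(1-q)^2 * Lp \<le> (1 - q^(2*k+1))^2 * fp (q^2) (q^2) i"
      by (rule mult_mono[OF y2[of k] Gp[of i]]) (use g0 Lp0 in auto)
    show ?thesis unfolding W_def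
      by (rule mult_mono[OF inner Gp[of j]]) (use g0 Lp0 in auto)
  qed
  have numle: "c * fp q (q^2) i * fp q (q^2) j \<le> c" if "c \<ge> 0" for c i j
  proof -
    have "fp q (q^2) i * fp q (q^2) j \<le> 1" using Fq1[of i] Fq1[of j] Fq0[of i] Fq0[of j]
      by (intro mult_le_one) auto
    then show ?thesis using that by (simp add: mult.assoc mult_left_le)
  qed
  have Tp_bd: "\<bar>Tp q N k\<bar> \<le> q * (q^3)^k / W" for N k
  proof -
    have "0 \<le> Tp q N k" unfolding Tp_def using Fq0 Gp Lp0 y1[of k] q0
      by (intro divide_nonneg_nonneg mult_nonneg_nonneg) (auto intro: less_imp_le order.trans[OF less_imp_le[OF Lp0]])
    moreover have "Tp q N k \<le> q^(3*k+1) / W" unfolding Tp_def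
      using numle[of "q^(3*k+1)"] q0 W0 Wle by (intro frac_le) auto
    ultimately show ?thesis unfolding pq3 by simp
  qed
  have Tm_bd: "\<bar>Tm q N k\<bar> \<le> q^k / W" for N k
  proof -
    have "0 \<le> Tm q N k" unfolding Tm_def using Fq0 Gp Lp0 y1[of k] q0
      by (intro divide_nonneg_nonneg mult_nonneg_nonneg) (auto intro: less_imp_le order.trans[OF less_imp_le[OF Lp0]])
    moreover have "Tm q N k \<le> q^k / W" unfolding Tm_def
      using numle[of "q^k"] q0 W0 Wle by (intro frac_le) auto
    ultimately show ?thesis by simp
  qed
  have bound: "norm (a k N) \<le> M k" for k N
  proof (cases "k < N")
    case True
    then have "norm (a k N) = \<bar>Tp q N k + Tm q N k\<bar>" by (simp add: a_def)
    also have "\<dots> \<le> \<bar>Tp q N k\<bar> + \<bar>Tm q N k\<bar>" by (rule abs_triangle_ineq)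
    also have "\<dots> \<le> M k" unfolding M_def using Tp_bd Tm_bd by (intro add_mono)
    finally show ?thesis .
  next
    case False
    then show ?thesis unfolding M_def a_def using W0 q0 by auto
  qed
  have bound': "\<bar>a k N\<bar> \<le> M k" for k N using bound[of k N] by simp
  have summM: "summable M"
  proof -
    have "summable (\<lambda>k. (q^3)^k)" using a0 by (intro summable_geometric) (simp add: power_less_one_iff)
    moreover have "summable (\<lambda>k. q^k)" using a0 by (intro summable_geometric) simp
    ultimately have "summable (\<lambda>k. q * (q^3)^k / W + q^k / W)"
      by (intro summable_add summable_divide summable_mult)
    then show ?thesis unfolding M_def .
  qed
  have lim_a: "(\<lambda>N. a k N) \<longlonglongrightarrow> C * s k" for k
  proof -
    have l1: "(\<lambda>N. fp q (q^2) (N+c)) \<longlonglongrightarrow> Lq" for c by (rule lim_plus[OF limq])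
    have l2: "(\<lambda>N. fp q (q^2) (N-c)) \<longlonglongrightarrow> Lq" for c by (rule lim_minus[OF limq])
    have l3: "(\<lambda>N. fp (q^2) (q^2) (N+c)) \<longlonglongrightarrow> Lp" for c by (rule lim_plus[OF limp])
    have l4: "(\<lambda>N. fp (q^2) (q^2) (N-c)) \<longlonglongrightarrow> Lp" for c by (rule lim_minus[OF limp])
    have l2': "(\<lambda>N. fp q (q^2) (N-k-1)) \<longlonglongrightarrow> Lq" using l2[of "Suc k"] by simp
    have l4': "(\<lambda>N. fp (q^2) (q^2) (N-k-1)) \<longlonglongrightarrow> Lp" using l4[of "Suc k"] by simp
    have l1': "(\<lambda>N. fp q (q^2) (N+k+1)) \<longlonglongrightarrow> Lq" using l1[of "Suc k"] by (simp add: add.assoc)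
    have dnz: "(1 - q^(2*k+1))^2 * Lp * Lp \<noteq> 0" using y1[of k] Lp0 by simp
    have LTp: "(\<lambda>N. Tp q N k) \<longlonglongrightarrow> q^(3*k+1) * Lq * Lq / ((1 - q^(2*k+1))^2 * Lp * Lp)"
      unfolding Tp_def by (intro tendsto_intros l1 l2 l3 l4' dnz)
    have LTm: "(\<lambda>N. Tm q N k) \<longlonglongrightarrow> q^k * Lq * Lq / ((1 - q^(2*k+1))^2 * Lp * Lp)"
      unfolding Tm_def by (intro tendsto_intros l2' l1' l4' l3 dnz)
    have eqC: "q^(3*k+1) * Lq * Lq / ((1 - q^(2*k+1))^2 * Lp * Lp) + q^k * Lq * Lq / ((1 - q^(2*k+1))^2 * Lp * Lp)
        = C * s k"
    proof -
      have "3*k+1 = (2*k+1) + k" by simp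
      then have e: "q^(3*k+1) = q^(2*k+1) * q^k" by (simp only: power_add)
      show ?thesis unfolding C_def s_def e using y1[of k] Lp0
        by (intro alg5) auto
    qed
    have LT: "(\<lambda>N. Tp q N k + Tm q N k) \<longlonglongrightarrow> C * s k"
      using tendsto_add[OF LTp LTm] unfolding eqC .
    have ev: "eventually (\<lambda>N. Tp q N k + Tm q N k = a k N) sequentially"
      using eventually_gt_at_top[of k] by eventually_elim (simp add: a_def)
    show ?thesis using tendsto_cong[OF ev] LT by simp
  qed
  have ev: "eventually (\<lambda>(k,n). norm (a k n) \<le> M k) (at_top \<times>\<^sub>F sequentially)"
    by (rule always_eventually) (simp add: split_beta bound')
  have T: "eventually (\<lambda>n. summable (\<lambda>k. norm (a k n))) sequentially \<and>
           summable (\<lambda>n. norm (C * s n)) \<and>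
           ((\<lambda>n. suminf (\<lambda>k. a k n)) \<longlonglongrightarrow> suminf (\<lambda>k. C * s k))"
    by (rule tannerys_theorem[OF lim_a ev summM]) simp
  have sa: "suminf (\<lambda>k. a k N) = (\<Sum>k<N. Tp q N k + Tm q N k)" for N
  proof -
    have "(\<lambda>k. a k N) sums (\<Sum>k<N. Tp q N k + Tm q N k)"
      using sums_If_finite_set[of "{..<N}" "\<lambda>k. Tp q N k + Tm q N k"] by (simp add: a_def)
    then show ?thesis by (rule sums_unique[symmetric])
  qed
  have L1: "(\<lambda>n. fp (q^2) (q^2) (Suc n) * fp (q^2) (q^2) n / (fp q (q^2) (Suc n))^2) \<longlonglongrightarrow> suminf (\<lambda>k. C * s k)"
  proof -
    have "(\<lambda>n. suminf (\<lambda>k. a k (Suc n))) \<longlonglongrightarrow> suminf (\<lambda>k. C * s k)"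
      using LIMSEQ_Suc[of "\<lambda>n. suminf (\<lambda>k. a k n)"] T by blast
    then show ?thesis unfolding sa finite_identity[OF q0 q1] .
  qed
  have L2: "(\<lambda>n. fp (q^2) (q^2) (Suc n) * fp (q^2) (q^2) n / (fp q (q^2) (Suc n))^2) \<longlonglongrightarrow> Lp * Lp / Lq^2"
  proof -
    have m1: "(\<lambda>n. fp (q^2) (q^2) (Suc n) * fp (q^2) (q^2) n) \<longlonglongrightarrow> Lp * Lp"
      by (rule tendsto_mult[OF LIMSEQ_Suc[OF limp] limp])
    have m2: "(\<lambda>n. (fp q (q^2) (Suc n))^2) \<longlonglongrightarrow> Lq^2"
      by (rule tendsto_power[OF LIMSEQ_Suc[OF limq]])
    have "Lq^2 \<noteq> 0" using Lq0 by simp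
    then show ?thesis by (rule tendsto_divide[OF m1 m2])
  qed
  have sumCs: "suminf (\<lambda>k. C * s k) = Lp * Lp / Lq^2" using L1 L2 by (rule LIMSEQ_unique)
  have C0: "C \<noteq> 0" unfolding C_def using Lq0 Lp0 by simp
  have summ_s: "summable s"
  proof -
    have "summable (\<lambda>n. norm (C * s n))" using T by (rule conjunct1[OF conjunct2])
    then have "summable (\<lambda>k. C * s k)" by (rule summable_norm_cancel)
    then show ?thesis using C0 by (simp add: summable_cmult_iff)
  qed
  have Cs: "C * suminf s = Lp * Lp / Lq^2" using sumCs suminf_mult[OF summ_s, of C] by simp
  have "suminf s = (Lp * Lp / Lq^2) / C" unfolding Cs[symmetric] using C0 by simp
  also have "\<dots> = Lp^4 / Lq^4" unfolding C_def using Lq0 Lp0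
    by (simp add: field_simps power2_eq_square eval_nat_numeral)
  finally have "s sums (Lp^4 / Lq^4)" using summable_sums[OF summ_s] by simp
  then show ?thesis unfolding s_def .
qed

end



theorem mainTheorem15:
  fixes q :: real
  assumes "0 < q" and "q < 1"
  shows "(\<lambda>n::nat. (1 + q ^ (2*n+1)) * q ^ n / (1 - q ^ (2*n+1))\<^sup>2)
           sums ((gosper_pi q)\<^sup>2 / ((1 - q\<^sup>2)\<^sup>2 * q powr (1/2)))"
proof -
  define Lq where "Lq = (\<Prod>k. 1 - q * (q^2)^k)"
  define Lp where "Lp = (\<Prod>k. 1 - q^2 * (q^2)^k)"
  have S: "(\<lambda>n::nat. (1 + q ^ (2*n+1)) * q ^ n / (1 - q ^ (2*n+1))\<^sup>2) sums (Lp^4 / Lq^4)"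
    unfolding Lq_def Lp_def by (rule main_sum[OF assms])
  have g: "gosper_pi q = (1 - q^2) * q powr (1/4) * Lp^2 / Lq^2"
    unfolding gosper_pi_def qpoch_inf_def Lq_def Lp_def ..
  have r: "(q powr (1/4))^2 = q powr (1/2)"
    by (simp add: power2_eq_square powr_add[symmetric])
  have "(gosper_pi q)^2 = (1-q^2)^2 * (q powr (1/4))^2 * ((Lp^2)^2 / (Lq^2)^2)"
    unfolding g by (simp add: power_mult_distrib power_divide)
  also have "\<dots> = ((1-q^2)^2 * q powr (1/2)) * (Lp^4 / Lq^4)"
    unfolding r by (simp add: power_mult[symmetric])
  finally have g2: "(gosper_pi q)^2 = ((1-q^2)^2 * q powr (1/2)) * (Lp^4 / Lq^4)" .
  have nz: "(1-q^2)^2 * q powr (1/2) \<noteq> 0"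
  proof -
    have "q^2 < 1" using assms by (simp add: power_less_one_iff)
    then show ?thesis using assms by simp
  qed
  have "(gosper_pi q)\<^sup>2 / ((1 - q\<^sup>2)\<^sup>2 * q powr (1/2)) = Lp^4 / Lq^4"
    unfolding g2 using nz by simp
  then show ?thesis using S by simp
qed

end
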